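(* Let $X$ be a real random variable with $\mathbb E[X]=0$ and $\mathbb E[X^2]=1$, and let $\mathrm{mmse}$ and $G$ be as defined in the context. Then $G$ is non-increasing on $(0,\infty)$ (on $(0,1]$ it has nonpositive derivative wherever differentiable, and it is constant equal to $1$ on $[1,\infty)$). Consequently, for every $\lambda>0$ the mercury level $\mathcal H(W)=\frac1\lambda G\!\big(\frac{1}{W\lambda}\big)$ is a non-decreasing function of $W\in(0,\infty)$.
   Context: For $\gamma\ge0$, $\mathrm{mmse}(\gamma)=\mathbb E\big[(X-\mathbb E[X\mid \sqrt\gamma X+Z])^2\big]$ with $Z\sim\mathcal N(0,1)$ independent of $X$; $\mathrm{mmse}$ is a continuous strictly decreasing bijection from $[0,\infty)$ onto $(0,1]$, and $\mathrm{mmse}^{-1}:(0,1]\to[0,\infty)$ denotes its inverse. The mercury factor is $G(\psi)=\frac1\psi-\mathrm{mmse}^{-1}(\psi)$ for $\psi\in(0,1]$ and $G(\psi)=1$ for $\psi\ge1$. *)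

theory Defs
  imports "HOL-Probability.Probability"
begin

definition mmse :: "'a measure \<Rightarrow> ('a \<Rightarrow> real) \<Rightarrow> ('a \<Rightarrow> real) \<Rightarrow> real \<Rightarrow> real" where
  "mmse M X Z \<gamma> =
     (let Y = (\<lambda>\<omega>. sqrt \<gamma> * X \<omega> + Z \<omega>);
          F = vimage_algebra (space M) Y borel
      in integral\<^sup>L M (\<lambda>\<omega>. (X \<omega> - real_cond_exp M F X \<omega>)\<^sup>2))"

definition mmse_inv :: "'a measure \<Rightarrow> ('a \<Rightarrow> real) \<Rightarrow> ('a \<Rightarrow> real) \<Rightarrow> real \<Rightarrow> real" where
  "mmse_inv M X Z = the_inv_into {0..} (mmse M X Z)"

text \<open>Mercury factor G (only meaningful for psi > 0).\<close>
definition mercury_G :: "'a measure \<Rightarrow> ('a \<Rightarrow> real) \<Rightarrow> ('a \<Rightarrow> real) \<Rightarrow> real \<Rightarrow> real" where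
  "mercury_G M X Z \<psi> = (if \<psi> \<ge> 1 then 1 else 1 / \<psi> - mmse_inv M X Z \<psi>)"

end

theory Submission
  imports Defs
begin


lemma doob_factor:
  fixes h Y :: "'a \<Rightarrow> real"
  assumes h: "h \<in> borel_measurable (vimage_algebra \<Omega> Y borel)"
  shows "\<exists>g\<in>borel_measurable borel. \<forall>\<omega>\<in>\<Omega>. h \<omega> = g (Y \<omega>)"
proof -
  have S: "sets (vimage_algebra \<Omega> Y borel) = {Y -` A \<inter> \<Omega> | A. A \<in> sets borel}"
    by (rule sets_vimage_algebra2) auto
  have "\<forall>q::rat. \<exists>A. A \<in> sets borel \<and> Y -` A \<inter> \<Omega> = {\<omega>\<in>\<Omega>. h \<omega> \<le> real_of_rat q}"
  proof
    fix q :: rat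
    have "{\<omega>\<in>space (vimage_algebra \<Omega> Y borel). h \<omega> \<le> real_of_rat q} \<in> sets (vimage_algebra \<Omega> Y borel)"
      using h by measurable
    then show "\<exists>A. A \<in> sets borel \<and> Y -` A \<inter> \<Omega> = {\<omega>\<in>\<Omega>. h \<omega> \<le> real_of_rat q}"
      unfolding S by auto
  qed
  then obtain A where A: "\<And>q. A q \<in> sets borel" "\<And>q. Y -` A q \<inter> \<Omega> = {\<omega>\<in>\<Omega>. h \<omega> \<le> real_of_rat q}"
    by metis
  define g where "g y = real_of_ereal (INF q. if y \<in> A q then ereal (real_of_rat q) else \<infinity>)" for y
  have "g \<in> borel_measurable borel"
    unfolding g_def using A(1) by measurable
  moreover have "h \<omega> = g (Y \<omega>)" if \<omega>: "\<omega> \<in> \<Omega>" for \<omega>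
  proof -
    have mem: "Y \<omega> \<in> A q \<longleftrightarrow> h \<omega> \<le> real_of_rat q" for q
      using A(2)[of q] \<omega> by blast
    have "(INF q. if Y \<omega> \<in> A q then ereal (real_of_rat q) else \<infinity>) = ereal (h \<omega>)"
    proof (rule antisym)
      show "ereal (h \<omega>) \<le> (INF q. if Y \<omega> \<in> A q then ereal (real_of_rat q) else \<infinity>)"
        by (rule INF_greatest) (auto simp: mem)
      show "(INF q. if Y \<omega> \<in> A q then ereal (real_of_rat q) else \<infinity>) \<le> ereal (h \<omega>)"
      proof (rule ereal_le_epsilon2)
        fix e :: real assume "0 < e"
        obtain r where r: "r \<in> \<rat>" "h \<omega> < r" "r < h \<omega> + e"
          using Rats_dense_in_real[of "h \<omega>" "h \<omega> + e"] \<open>0<e\<close> by auto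
        then obtain q where q: "r = real_of_rat q" by (auto simp: Rats_def)
        have "(INF q. if Y \<omega> \<in> A q then ereal (real_of_rat q) else \<infinity>) \<le> ereal (real_of_rat q)"
          using mem[of q] r q by (intro INF_lower2[of q]) auto
        also have "\<dots> \<le> ereal (h \<omega>) + ereal e" using r q by simp
        finally show "(INF q. if Y \<omega> \<in> A q then ereal (real_of_rat q) else \<infinity>) \<le> ereal (h \<omega>) + ereal e" .
      qed
    qed
    then show ?thesis unfolding g_def by simp
  qed
  ultimately show ?thesis by blast
qed



lemma sq_bound_integrable:
  fixes f g :: "'a \<Rightarrow> real"
  assumes "integrable M (\<lambda>x. (f x)\<^sup>2)" "integrable M (\<lambda>x. (g x)\<^sup>2)"
    "f \<in> borel_measurable M" "g \<in> borel_measurable M"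
  shows "integrable M (\<lambda>x. f x * g x)"
proof (rule Bochner_Integration.integrable_bound[where f="\<lambda>x. (f x)\<^sup>2 + (g x)\<^sup>2"])
  show "integrable M (\<lambda>x. (f x)\<^sup>2 + (g x)\<^sup>2)" using assms by auto
  show "AE x in M. norm (f x * g x) \<le> norm ((f x)\<^sup>2 + (g x)\<^sup>2)"
  proof (rule AE_I2)
    fix x
    have "\<bar>f x * g x\<bar> \<le> (f x)\<^sup>2 + (g x)\<^sup>2"
    proof -
      have "0 \<le> (\<bar>f x\<bar> - \<bar>g x\<bar>)\<^sup>2" by simp
      moreover have "(\<bar>f x\<bar> - \<bar>g x\<bar>)\<^sup>2 = (f x)\<^sup>2 - 2 * (\<bar>f x\<bar> * \<bar>g x\<bar>) + (g x)\<^sup>2"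
        by (simp add: power2_diff)
      moreover have "0 \<le> \<bar>f x\<bar> * \<bar>g x\<bar>" by simp
      ultimately show ?thesis using zero_le_power2[of "f x"] zero_le_power2[of "g x"]
        unfolding abs_mult by linarith
    qed
    then show "norm (f x * g x) \<le> norm ((f x)\<^sup>2 + (g x)\<^sup>2)" by simp
  qed
qed (use assms in auto)

lemma sq_diff_integrable:
  fixes f g :: "'a \<Rightarrow> real"
  assumes "integrable M (\<lambda>x. (f x)\<^sup>2)" "integrable M (\<lambda>x. (g x)\<^sup>2)"
    "f \<in> borel_measurable M" "g \<in> borel_measurable M"
  shows "integrable M (\<lambda>x. (f x - g x)\<^sup>2)"
proof -
  have "integrable M (\<lambda>x. (f x)\<^sup>2 - 2 * (f x * g x) + (g x)\<^sup>2)"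
    using assms sq_bound_integrable[OF assms] by auto
  then show ?thesis by (simp add: power2_diff algebra_simps)
qed

lemma proj_ineq:
  fixes M :: "'a measure" and X Y g :: "_ \<Rightarrow> real"
  assumes M: "prob_space M"
    and [measurable]: "X \<in> borel_measurable M" "Y \<in> borel_measurable M" "g \<in> borel_measurable borel"
    and X2: "integrable M (\<lambda>\<omega>. (X \<omega>)\<^sup>2)"
    and E: "integrable M (\<lambda>\<omega>. (X \<omega> - g (Y \<omega>))\<^sup>2)"
  shows "integral\<^sup>L M (\<lambda>\<omega>. (X \<omega> - real_cond_exp M (vimage_algebra (space M) Y borel) X \<omega>)\<^sup>2)
     \<le> integral\<^sup>L M (\<lambda>\<omega>. (X \<omega> - g (Y \<omega>))\<^sup>2)"
proof -
  define F where "F = vimage_algebra (space M) Y borel"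
  interpret prob_space M by fact
  have sub: "subalgebra M F"
    unfolding subalgebra_def F_def
    using sets_image_in_sets[of M "space M" Y borel] by auto
  interpret finite_measure_subalgebra M F
    by unfold_locales (rule sub)
  define c where "c = real_cond_exp M F X"
  define h where "h = (\<lambda>\<omega>. g (Y \<omega>))"
  have YF: "Y \<in> measurable F borel"
    unfolding F_def by (rule measurable_vimage_algebra1) auto
  have hF[measurable]: "h \<in> borel_measurable F"
    unfolding h_def using YF by measurable
  have cF[measurable]: "c \<in> borel_measurable F"
    unfolding c_def by simp
  have cM[measurable]: "c \<in> borel_measurable M" "h \<in> borel_measurable M"
    using measurable_from_subalg[OF subalg cF] measurable_from_subalg[OF subalg hF] by auto
  have X1: "integrable M X"
    by (rule square_integrable_imp_integrable[OF _ X2]) simp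
  have jen: "AE x in M. (\<lambda>x. x\<^sup>2) (c x) \<le> real_cond_exp M F (\<lambda>x. (X x)\<^sup>2) x"
    unfolding c_def
  proof (rule real_cond_exp_jensens_inequality(2)[where I=UNIV])
    show "convex_on UNIV (\<lambda>x::real. x\<^sup>2)"
      by (rule convex_on_realI[where f'="\<lambda>x. 2*x"]) (auto intro!: derivative_eq_intros)
  qed (auto simp: X1 X2)
  have ce2: "integrable M (real_cond_exp M F (\<lambda>x. (X x)\<^sup>2))"
    by (rule real_cond_exp_int(1)[OF X2])
  have c2: "integrable M (\<lambda>x. (c x)\<^sup>2)"
  proof (rule Bochner_Integration.integrable_bound[OF ce2])
    show "AE x in M. norm ((c x)\<^sup>2) \<le> norm (real_cond_exp M F (\<lambda>x. (X x)\<^sup>2) x)"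
      using jen by eventually_elim auto
  qed simp
  have h2: "integrable M (\<lambda>x. (h x)\<^sup>2)"
  proof -
    have "integrable M (\<lambda>x. (X x - (X x - h x))\<^sup>2)"
      by (rule sq_diff_integrable) (use X2 E in \<open>auto simp: h_def\<close>)
    then show ?thesis by simp
  qed
  define f where "f x = c x - h x" for x
  have fF[measurable]: "f \<in> borel_measurable F" unfolding f_def by measurable
  have fM[measurable]: "f \<in> borel_measurable M" unfolding f_def by measurable
  have f2: "integrable M (\<lambda>x. (f x)\<^sup>2)"
    unfolding f_def by (rule sq_diff_integrable) (use c2 h2 in auto)
  have fX: "integrable M (\<lambda>x. f x * X x)"
    by (rule sq_bound_integrable) (use f2 X2 in auto)
  have orth: "(\<integral>x. f x * c x \<partial>M) = (\<integral>x. f x * X x \<partial>M)"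
    unfolding c_def by (rule real_cond_exp_intg(2)[OF fX]) auto
  have fc: "integrable M (\<lambda>x. f x * c x)"
    by (rule sq_bound_integrable) (use f2 c2 in auto)
  have Xc2: "integrable M (\<lambda>x. (X x - c x)\<^sup>2)"
    by (rule sq_diff_integrable) (use X2 c2 in auto)
  have eq: "(X x - h x)\<^sup>2 = (X x - c x)\<^sup>2 + 2 * (f x * X x - f x * c x) + (f x)\<^sup>2" for x
    unfolding f_def by (simp add: power2_eq_square algebra_simps)
  have "(\<integral>x. (X x - h x)\<^sup>2 \<partial>M) = (\<integral>x. (X x - c x)\<^sup>2 \<partial>M) + 2 * ((\<integral>x. f x * X x \<partial>M) - (\<integral>x. f x * c x \<partial>M)) + (\<integral>x. (f x)\<^sup>2 \<partial>M)"
    unfolding eq using Xc2 fX fc f2 by simp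
  also have "\<dots> = (\<integral>x. (X x - c x)\<^sup>2 \<partial>M) + (\<integral>x. (f x)\<^sup>2 \<partial>M)"
    using orth by simp
  also have "\<dots> \<ge> (\<integral>x. (X x - c x)\<^sup>2 \<partial>M)"
    by (simp add: integral_nonneg_AE)
  finally show ?thesis unfolding c_def F_def h_def by simp
qed

lemma cexp_err_integrable:
  fixes M :: "'a measure" and X Y :: "_ \<Rightarrow> real"
  assumes M: "prob_space M"
    and [measurable]: "X \<in> borel_measurable M" "Y \<in> borel_measurable M"
    and X2: "integrable M (\<lambda>\<omega>. (X \<omega>)\<^sup>2)"
  shows "integrable M (\<lambda>\<omega>. (X \<omega> - real_cond_exp M (vimage_algebra (space M) Y borel) X \<omega>)\<^sup>2)"
    and "real_cond_exp M (vimage_algebra (space M) Y borel) X \<in> borel_measurable (vimage_algebra (space M) Y borel)"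
proof -
  define F where "F = vimage_algebra (space M) Y borel"
  interpret prob_space M by fact
  have sub: "subalgebra M F"
    unfolding subalgebra_def F_def
    using sets_image_in_sets[of M "space M" Y borel] by auto
  interpret finite_measure_subalgebra M F
    by unfold_locales (rule sub)
  define c where "c = real_cond_exp M F X"
  have cF[measurable]: "c \<in> borel_measurable F"
    unfolding c_def by simp
  have cM[measurable]: "c \<in> borel_measurable M"
    using measurable_from_subalg[OF subalg cF] by auto
  have X1: "integrable M X"
    by (rule square_integrable_imp_integrable[OF _ X2]) simp
  have jen: "AE x in M. (\<lambda>x. x\<^sup>2) (c x) \<le> real_cond_exp M F (\<lambda>x. (X x)\<^sup>2) x"
    unfolding c_def
  proof (rule real_cond_exp_jensens_inequality(2)[where I=UNIV])
    show "convex_on UNIV (\<lambda>x::real. x\<^sup>2)"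
      by (rule convex_on_realI[where f'="\<lambda>x. 2*x"]) (auto intro!: derivative_eq_intros)
  qed (auto simp: X1 X2)
  have ce2: "integrable M (real_cond_exp M F (\<lambda>x. (X x)\<^sup>2))"
    by (rule real_cond_exp_int(1)[OF X2])
  have c2: "integrable M (\<lambda>x. (c x)\<^sup>2)"
  proof (rule Bochner_Integration.integrable_bound[OF ce2])
    show "AE x in M. norm ((c x)\<^sup>2) \<le> norm (real_cond_exp M F (\<lambda>x. (X x)\<^sup>2) x)"
      using jen by eventually_elim auto
  qed simp
  have "integrable M (\<lambda>x. (X x - c x)\<^sup>2)"
    by (rule sq_diff_integrable) (use X2 c2 in auto)
  then show "integrable M (\<lambda>\<omega>. (X \<omega> - real_cond_exp M (vimage_algebra (space M) Y borel) X \<omega>)\<^sup>2)"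
    unfolding c_def F_def .
  show "real_cond_exp M (vimage_algebra (space M) Y borel) X \<in> borel_measurable (vimage_algebra (space M) Y borel)"
    by simp
qed



lemma prob_jensen_sq:
  fixes f :: "'b \<Rightarrow> real"
  assumes N: "prob_space N" and [measurable]: "f \<in> borel_measurable N"
  shows "ennreal ((x - integral\<^sup>L N f)\<^sup>2) \<le> (\<integral>\<^sup>+w. ennreal ((x - f w)\<^sup>2) \<partial>N)"
proof (cases "integrable N (\<lambda>w. (x - f w)\<^sup>2)")
  case False
  then have "(\<integral>\<^sup>+w. ennreal ((x - f w)\<^sup>2) \<partial>N) = \<infinity>"
    by (simp add: integrable_iff_bounded) (metis less_top)
  then show ?thesis by simp
next
  case True
  interpret prob_space N by fact
  define g where "g w = x - f w" for w
  have [measurable]: "g \<in> borel_measurable N" unfolding g_def by measurable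
  have g2: "integrable N (\<lambda>w. (g w)\<^sup>2)" using True unfolding g_def .
  have g1: "integrable N g" by (rule square_integrable_imp_integrable[OF _ g2]) simp
  have f1: "integrable N f"
  proof -
    have "integrable N (\<lambda>w. x - g w)" using g1 by simp
    then show ?thesis unfolding g_def by simp
  qed
  have Eg: "integral\<^sup>L N g = x - integral\<^sup>L N f"
    unfolding g_def using f1 by (simp add: prob_space)
  let ?c = "integral\<^sup>L N g"
  have "0 \<le> (\<integral>w. (g w - ?c)\<^sup>2 \<partial>N)" by simp
  also have "(\<integral>w. (g w - ?c)\<^sup>2 \<partial>N) = (\<integral>w. (g w)\<^sup>2 - 2 * ?c * g w + ?c\<^sup>2 \<partial>N)"
    by (rule Bochner_Integration.integral_cong) (simp_all add: power2_diff algebra_simps)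
  also have "\<dots> = (\<integral>w. (g w)\<^sup>2 \<partial>N) - 2 * ?c * ?c + ?c\<^sup>2"
    using g1 g2 by (simp add: prob_space)
  finally have "?c\<^sup>2 \<le> (\<integral>w. (g w)\<^sup>2 \<partial>N)" by (simp add: power2_eq_square)
  then have "ennreal (?c\<^sup>2) \<le> ennreal (\<integral>w. (g w)\<^sup>2 \<partial>N)" by (rule ennreal_leI)
  also have "ennreal (\<integral>w. (g w)\<^sup>2 \<partial>N) = (\<integral>\<^sup>+w. ennreal ((g w)\<^sup>2) \<partial>N)"
    using g2 by (intro nn_integral_eq_integral[symmetric]) auto
  finally have "ennreal (?c\<^sup>2) \<le> (\<integral>\<^sup>+w. ennreal ((g w)\<^sup>2) \<partial>N)" .
  then show ?thesis unfolding Eg g_def by simp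
qed

lemma gauss_sq_moment:
  fixes p k :: real
  shows "(\<integral>\<^sup>+b. ennreal ((p - k * b)\<^sup>2) * std_normal_density b \<partial>lborel) = ennreal (p\<^sup>2 + k\<^sup>2)"
proof -
  let ?p = std_normal_density
  have i0: "integrable lborel ?p" by simp
  have i1: "integrable lborel (\<lambda>b. ?p b * b)" using integrable_std_normal_moment[of 1] by simp
  have i2: "integrable lborel (\<lambda>b. ?p b * b\<^sup>2)" using integrable_std_normal_moment[of 2] by simp
  have v1: "(\<integral>b. ?p b * b \<partial>lborel) = 0" using integral_std_normal_moment_odd[of 0] by simp
  have v2: "(\<integral>b. ?p b * b\<^sup>2 \<partial>lborel) = 1" using integral_std_normal_moment_even[of 1] by simp
  have v0: "(\<integral>b. ?p b \<partial>lborel) = 1" by simp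
  have eq: "(p - k * b)\<^sup>2 * ?p b = p\<^sup>2 * ?p b - 2 * p * k * (?p b * b) + k\<^sup>2 * (?p b * b\<^sup>2)" for b
    by (simp add: power2_eq_square algebra_simps)
  have int: "integrable lborel (\<lambda>b. (p - k * b)\<^sup>2 * ?p b)"
    unfolding eq using i0 i1 i2 by auto
  have "(\<integral>\<^sup>+b. ennreal ((p - k * b)\<^sup>2) * ?p b \<partial>lborel) = (\<integral>\<^sup>+b. ennreal ((p - k * b)\<^sup>2 * ?p b) \<partial>lborel)"
    by (simp add: ennreal_mult)
  also have "\<dots> = ennreal (\<integral>b. (p - k * b)\<^sup>2 * ?p b \<partial>lborel)"
    using int by (intro nn_integral_eq_integral) auto
  also have "(\<integral>b. (p - k * b)\<^sup>2 * ?p b \<partial>lborel) = p\<^sup>2 + k\<^sup>2"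
    unfolding eq using i0 i1 i2 v0 v1 v2 by simp
  finally show ?thesis .
qed



lemma gauss_swap:
  fixes t u a z :: real
  assumes tu: "t\<^sup>2 + u\<^sup>2 = 1" and u: "u > 0"
  shows "std_normal_density z * std_normal_density ((a - t * z) / u)
       = std_normal_density a * std_normal_density ((z - t * a) / u)"
proof -
  have "z\<^sup>2 + ((a - t * z) / u)\<^sup>2 = a\<^sup>2 + ((z - t * a) / u)\<^sup>2"
  proof -
    have "u\<^sup>2 * (z\<^sup>2 + ((a - t * z) / u)\<^sup>2) = u\<^sup>2 * z\<^sup>2 + (a - t*z)\<^sup>2"
      using u by (simp add: power_divide field_simps)
    also have "\<dots> = u\<^sup>2 * a\<^sup>2 + (z - t*a)\<^sup>2"
    proof -
      have e1: "u\<^sup>2 * z\<^sup>2 + (a - t*z)\<^sup>2 = (t\<^sup>2 + u\<^sup>2) * z\<^sup>2 + a\<^sup>2 - 2*a*t*z"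
        by (simp add: power2_eq_square algebra_simps)
      have e2: "u\<^sup>2 * a\<^sup>2 + (z - t*a)\<^sup>2 = (t\<^sup>2 + u\<^sup>2) * a\<^sup>2 + z\<^sup>2 - 2*a*t*z"
        by (simp add: power2_eq_square algebra_simps)
      show ?thesis unfolding e1 e2 tu by simp
    qed
    also have "\<dots> = u\<^sup>2 * (a\<^sup>2 + ((z - t * a) / u)\<^sup>2)"
      using u by (simp add: power_divide field_simps)
    finally show ?thesis using u by simp
  qed
  then have "exp (- z\<^sup>2 / 2) * exp (- ((a - t * z) / u)\<^sup>2 / 2) = exp (- a\<^sup>2 / 2) * exp (- ((z - t * a) / u)\<^sup>2 / 2)"
    unfolding exp_add[symmetric] by (simp add: field_simps)
  then show ?thesis
    unfolding normal_density_def by simp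
qed

lemma rotation_nn:
  fixes H :: "real \<times> real \<Rightarrow> ennreal" and t u :: real
  assumes H[measurable]: "H \<in> borel_measurable borel"
    and tu: "t\<^sup>2 + u\<^sup>2 = 1" and u: "u > 0"
  shows "(\<integral>\<^sup>+z. \<integral>\<^sup>+w. H (t*z+u*w, u*z-t*w) * std_normal_density z * std_normal_density w \<partial>lborel \<partial>lborel)
       = (\<integral>\<^sup>+a. \<integral>\<^sup>+b. H (a, b) * std_normal_density a * std_normal_density b \<partial>lborel \<partial>lborel)"
proof -
  let ?p = std_normal_density
  have step1: "(\<integral>\<^sup>+w. H (t*z+u*w, u*z-t*w) * ?p z * ?p w \<partial>lborel)
      = ennreal (1/u) * (\<integral>\<^sup>+a. H (a, (z - t*a)/u) * ?p a * ?p ((z - t*a)/u) \<partial>lborel)" for z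
  proof -
    have "(\<integral>\<^sup>+a. H (a, (z - t*a)/u) * ?p a * ?p ((z - t*a)/u) \<partial>lborel)
        = (\<integral>\<^sup>+a. H (a, (z - t*a)/u) * ?p z * ?p ((a - t*z)/u) \<partial>lborel)"
      using gauss_swap[OF tu u] by (intro nn_integral_cong) (simp add: mult.assoc ennreal_mult'[symmetric])
    also have "\<dots> = ennreal u * (\<integral>\<^sup>+w. H (t*z + u*w, (z - t*(t*z + u*w))/u) * ?p z * ?p ((t*z + u*w - t*z)/u) \<partial>lborel)"
      using u by (subst nn_integral_real_affine[where c=u and t="t*z"]) auto
    also have "\<dots> = ennreal u * (\<integral>\<^sup>+w. H (t*z+u*w, u*z-t*w) * ?p z * ?p w \<partial>lborel)"
    proof -
      have "(z - t*(t*z + u*w))/u = u*z-t*w" for w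
      proof -
        have "z - t*(t*z + u*w) - u*(u*z - t*w) = z*(1 - (t\<^sup>2 + u\<^sup>2))"
          by (simp add: power2_eq_square algebra_simps)
        then have "z - t*(t*z + u*w) = u*(u*z - t*w)"
          using tu by simp
        then show ?thesis using u by simp
      qed
      moreover have "(t*z + u*w - t*z)/u = w" for w using u by simp
      ultimately show ?thesis by simp
    qed
    finally show ?thesis using u
      by (simp add: mult.assoc[symmetric] ennreal_mult'[symmetric] divide_simps)
  qed
  have step3: "(\<integral>\<^sup>+z. H (a, (z - t*a)/u) * ?p a * ?p ((z - t*a)/u) \<partial>lborel)
      = ennreal u * (\<integral>\<^sup>+b. H (a, b) * ?p a * ?p b \<partial>lborel)" for a
    using u by (subst nn_integral_real_affine[where c=u and t="t*a"]) auto
  have "(\<integral>\<^sup>+z. \<integral>\<^sup>+w. H (t*z+u*w, u*z-t*w) * ?p z * ?p w \<partial>lborel \<partial>lborel)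
      = (\<integral>\<^sup>+z. ennreal (1/u) * (\<integral>\<^sup>+a. H (a, (z - t*a)/u) * ?p a * ?p ((z - t*a)/u) \<partial>lborel) \<partial>lborel)"
    using step1 by simp
  also have "\<dots> = ennreal (1/u) * (\<integral>\<^sup>+z. \<integral>\<^sup>+a. H (a, (z - t*a)/u) * ?p a * ?p ((z - t*a)/u) \<partial>lborel \<partial>lborel)"
    by (rule nn_integral_cmult) measurable
  also have "(\<integral>\<^sup>+z. \<integral>\<^sup>+a. H (a, (z - t*a)/u) * ?p a * ?p ((z - t*a)/u) \<partial>lborel \<partial>lborel)
      = (\<integral>\<^sup>+a. \<integral>\<^sup>+z. H (a, (z - t*a)/u) * ?p a * ?p ((z - t*a)/u) \<partial>lborel \<partial>lborel)"
    by (rule lborel_pair.Fubini') measurable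
  also have "\<dots> = (\<integral>\<^sup>+a. ennreal u * (\<integral>\<^sup>+b. H (a, b) * ?p a * ?p b \<partial>lborel) \<partial>lborel)"
    using step3 by simp
  also have "\<dots> = ennreal u * (\<integral>\<^sup>+a. \<integral>\<^sup>+b. H (a, b) * ?p a * ?p b \<partial>lborel \<partial>lborel)"
    by (rule nn_integral_cmult) measurable
  finally show ?thesis
    using u by (simp add: mult.assoc[symmetric] ennreal_mult'[symmetric])
qed


lemma law_transfer:
  fixes M :: "'a measure" and X Z :: "'a \<Rightarrow> real" and h :: "real \<times> real \<Rightarrow> ennreal"
  assumes M: "prob_space M"
    and ind: "prob_space.indep_var M borel X borel Z"
    and dZ: "distributed M lborel Z (\<lambda>x. ennreal (std_normal_density x))"
    and h[measurable]: "h \<in> borel_measurable (borel \<Otimes>\<^sub>M borel)"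
  shows "(\<integral>\<^sup>+\<omega>. h (X \<omega>, Z \<omega>) \<partial>M) = (\<integral>\<^sup>+x. \<integral>\<^sup>+z. h (x, z) * std_normal_density z \<partial>lborel \<partial>distr M borel X)"
proof -
  interpret prob_space M by fact
  have rv: "random_variable borel X" "random_variable borel Z"
    and D: "distr M borel X \<Otimes>\<^sub>M distr M borel Z = distr M (borel \<Otimes>\<^sub>M borel) (\<lambda>x. (X x, Z x))"
    using ind unfolding indep_var_distribution_eq by auto
  note [measurable] = rv
  interpret Zp: prob_space "distr M borel Z" by (rule prob_space_distr) (rule rv)
  have DZ: "distr M borel Z = density lborel (\<lambda>x. ennreal (std_normal_density x))"
  proof -
    have "distr M borel Z = distr M lborel Z" by (rule distr_cong) auto
    then show ?thesis using dZ unfolding distributed_def by simp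
  qed
  have "(\<integral>\<^sup>+\<omega>. h (X \<omega>, Z \<omega>) \<partial>M) = (\<integral>\<^sup>+p. h p \<partial>distr M (borel \<Otimes>\<^sub>M borel) (\<lambda>x. (X x, Z x)))"
    by (subst nn_integral_distr) auto
  also have "\<dots> = (\<integral>\<^sup>+p. h p \<partial>(distr M borel X \<Otimes>\<^sub>M distr M borel Z))"
    unfolding D ..
  also have "\<dots> = (\<integral>\<^sup>+x. \<integral>\<^sup>+z. h (x, z) \<partial>distr M borel Z \<partial>distr M borel X)"
    by (rule Zp.nn_integral_fst[symmetric]) simp
  also have "\<dots> = (\<integral>\<^sup>+x. \<integral>\<^sup>+z. h (x, z) * std_normal_density z \<partial>lborel \<partial>distr M borel X)"
    unfolding DZ by (subst nn_integral_density) (auto simp: mult.commute)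
  finally show ?thesis .
qed



lemma jensen_gauss:
  fixes f :: "real \<Rightarrow> real"
  assumes [measurable]: "f \<in> borel_measurable borel"
  shows "ennreal ((x - (\<integral>w. std_normal_density w * f w \<partial>lborel))\<^sup>2)
      \<le> (\<integral>\<^sup>+w. ennreal ((x - f w)\<^sup>2) * std_normal_density w \<partial>lborel)"
proof -
  let ?N = "density lborel (\<lambda>w. ennreal (std_normal_density w))"
  have "integral\<^sup>L ?N f = (\<integral>w. std_normal_density w * f w \<partial>lborel)"
    by (subst integral_density) auto
  moreover have "(\<integral>\<^sup>+w. ennreal ((x - f w)\<^sup>2) \<partial>?N) = (\<integral>\<^sup>+w. ennreal ((x - f w)\<^sup>2) * std_normal_density w \<partial>lborel)"
    by (subst nn_integral_density) (auto simp: mult.commute)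
  moreover have "ennreal ((x - integral\<^sup>L ?N f)\<^sup>2) \<le> (\<integral>\<^sup>+w. ennreal ((x - f w)\<^sup>2) \<partial>?N)"
    by (rule prob_jensen_sq) (auto intro: prob_space_normal_density)
  ultimately show ?thesis by simp
qed

lemma nn_std_normal_one: "(\<integral>\<^sup>+a. ennreal (std_normal_density a) \<partial>lborel) = 1"
  by (subst nn_integral_eq_integral) auto


lemma key:
  fixes M :: "'a measure" and X Z :: "'a \<Rightarrow> real"
  assumes M: "prob_space M"
    and XM[measurable]: "X \<in> borel_measurable M" and ZM[measurable]: "Z \<in> borel_measurable M"
    and ind: "prob_space.indep_var M borel X borel Z"
    and dZ: "distributed M lborel Z (\<lambda>x. ennreal (std_normal_density x))"
    and X2: "integrable M (\<lambda>\<omega>. (X \<omega>)\<^sup>2)"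
    and g0: "0 \<le> \<gamma>" and gg: "\<gamma> < \<gamma>'"
    and mpos: "0 < mmse M X Z \<gamma>" and m'pos: "0 < mmse M X Z \<gamma>'"
  shows "\<gamma>' - \<gamma> \<le> 1 / mmse M X Z \<gamma>' - 1 / mmse M X Z \<gamma>"
proof -
  interpret prob_space M by fact
  let ?p = std_normal_density
  define s where "s = sqrt \<gamma>"
  define s' where "s' = sqrt \<gamma>'"
  define \<delta> where "\<delta> = \<gamma>' - \<gamma>"
  define r where "r = sqrt \<delta>"
  define t where "t = s / s'"
  define u where "u = r / s'"
  define m where "m = mmse M X Z \<gamma>"
  define k where "k = r * m / (1 + \<delta> * m)"
  have s'pos: "s' > 0" unfolding s'_def using g0 gg by simp
  have dpos: "\<delta> > 0" unfolding \<delta>_def using gg by simp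
  have upos: "u > 0" unfolding u_def r_def using s'pos dpos by simp
  have ts': "t * s' = s" unfolding t_def using s'pos by simp
  have us': "u * s' = r" unfolding u_def using s'pos by simp
  have tu: "t\<^sup>2 + u\<^sup>2 = 1"
  proof -
    have "t\<^sup>2 + u\<^sup>2 = (s\<^sup>2 + r\<^sup>2) / s'\<^sup>2" unfolding t_def u_def by (simp add: power_divide add_divide_distrib)
    also have "s\<^sup>2 + r\<^sup>2 = s'\<^sup>2" unfolding s_def r_def s'_def \<delta>_def using g0 gg by simp
    finally show ?thesis using s'pos by simp
  qed
  have mp: "m > 0" unfolding m_def by (rule mpos)
  define Y where "Y = (\<lambda>\<omega>. s * X \<omega> + Z \<omega>)"
  have YM[measurable]: "Y \<in> borel_measurable M" unfolding Y_def by measurable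
  define c where "c = real_cond_exp M (vimage_algebra (space M) Y borel) X"
  have cerr: "integrable M (\<lambda>\<omega>. (X \<omega> - c \<omega>)\<^sup>2)"
    and cF: "c \<in> borel_measurable (vimage_algebra (space M) Y borel)"
    using cexp_err_integrable[OF M XM YM X2] unfolding c_def by auto
  obtain g where g[measurable]: "g \<in> borel_measurable borel" and cg: "\<And>\<omega>. \<omega> \<in> space M \<Longrightarrow> c \<omega> = g (Y \<omega>)"
    using doob_factor[OF cF] by blast
  have m_eq: "m = (\<integral>\<omega>. (X \<omega> - g (Y \<omega>))\<^sup>2 \<partial>M)"
    unfolding m_def mmse_def Let_def c_def[symmetric] Y_def[symmetric] s_def[symmetric]
    by (rule Bochner_Integration.integral_cong) (auto simp: cg)
  have gerr: "integrable M (\<lambda>\<omega>. (X \<omega> - g (Y \<omega>))\<^sup>2)"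
  proof -
    have "integrable M (\<lambda>\<omega>. (X \<omega> - c \<omega>)\<^sup>2) = integrable M (\<lambda>\<omega>. (X \<omega> - g (Y \<omega>))\<^sup>2)"
      by (rule Bochner_Integration.integrable_cong) (auto simp: cg)
    then show ?thesis using cerr by simp
  qed
  have m_nn: "(\<integral>\<^sup>+x. \<integral>\<^sup>+z. ennreal ((x - g (s * x + z))\<^sup>2) * ?p z \<partial>lborel \<partial>distr M borel X) = ennreal m"
  proof -
    have "(\<integral>\<^sup>+\<omega>. ennreal ((X \<omega> - g (Y \<omega>))\<^sup>2) \<partial>M) = ennreal m"
      unfolding m_eq using gerr by (intro nn_integral_eq_integral) auto
    moreover have "(\<integral>\<^sup>+\<omega>. ennreal ((X \<omega> - g (Y \<omega>))\<^sup>2) \<partial>M)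
        = (\<integral>\<^sup>+x. \<integral>\<^sup>+z. ennreal ((x - g (s * x + z))\<^sup>2) * ?p z \<partial>lborel \<partial>distr M borel X)"
      unfolding Y_def
      using law_transfer[OF M ind dZ, of "\<lambda>(x,z). ennreal ((x - g (s * x + z))\<^sup>2)"] by simp
    ultimately show ?thesis by simp
  qed

  define est where "est y w = g (t*y+u*w) + k * (u*y - t*w - r * g (t*y+u*w))" for y w
  define gh where "gh y = (\<integral>w. ?p w * est y w \<partial>lborel)" for y
  have estM[measurable]: "(\<lambda>(y, w). est y w) \<in> borel_measurable (borel \<Otimes>\<^sub>M lborel)"
    unfolding est_def by measurable
  have ghM[measurable]: "gh \<in> borel_measurable borel"
    unfolding gh_def by (rule lborel.borel_measurable_lebesgue_integral) (simp add: split_beta')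
  define H where "H x = (\<lambda>p::real\<times>real. ennreal (((1-k*r)*(x - g (s*x + fst p)) - k * snd p)\<^sup>2))" for x
  have HM[measurable]: "H x \<in> borel_measurable borel" for x
    unfolding H_def borel_prod[symmetric] by measurable
  define \<mu> where "\<mu> = distr M borel X"
  interpret mu: prob_space \<mu> unfolding \<mu>_def by (rule prob_space_distr) simp
  have S2: "(x - est (s'*x+z) w)\<^sup>2 = ((1-k*r)*(x - g (s*x + (t*z+u*w))) - k*(u*z-t*w))\<^sup>2" for x z w
  proof -
    have a1: "t*(s'*x+z)+u*w = s*x + (t*z+u*w)" using ts' by (simp add: algebra_simps)
    have a2: "u*(s'*x+z) = r*x + u*z" using us' by (simp add: algebra_simps)
    show ?thesis unfolding est_def a1 a2 by (simp add: algebra_simps)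
  qed
  have inner: "(\<integral>\<^sup>+z. ennreal ((x - gh (s'*x+z))\<^sup>2) * ?p z \<partial>lborel)
      \<le> ennreal ((1-k*r)\<^sup>2) * (\<integral>\<^sup>+a. ennreal ((x - g (s*x+a))\<^sup>2) * ?p a \<partial>lborel) + ennreal (k\<^sup>2)" for x
  proof -
    have "(\<integral>\<^sup>+z. ennreal ((x - gh (s'*x+z))\<^sup>2) * ?p z \<partial>lborel)
        \<le> (\<integral>\<^sup>+z. (\<integral>\<^sup>+w. ennreal ((x - est (s'*x+z) w)\<^sup>2) * ?p w \<partial>lborel) * ?p z \<partial>lborel)"
      unfolding gh_def
      by (intro nn_integral_mono mult_right_mono jensen_gauss) auto
    also have "\<dots> = (\<integral>\<^sup>+z. \<integral>\<^sup>+w. H x (t*z+u*w, u*z-t*w) * ?p z * ?p w \<partial>lborel \<partial>lborel)"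
    proof (rule nn_integral_cong)
      fix z
      have "(\<integral>\<^sup>+w. ennreal ((x - est (s'*x+z) w)\<^sup>2) * ?p w \<partial>lborel) * ?p z
          = (\<integral>\<^sup>+w. ennreal ((x - est (s'*x+z) w)\<^sup>2) * ?p w * ?p z \<partial>lborel)"
        by (rule nn_integral_multc[symmetric]) measurable
      also have "\<dots> = (\<integral>\<^sup>+w. H x (t*z+u*w, u*z-t*w) * ?p z * ?p w \<partial>lborel)"
        by (intro nn_integral_cong) (simp add: S2 H_def mult_ac)
      finally show "(\<integral>\<^sup>+w. ennreal ((x - est (s'*x+z) w)\<^sup>2) * ?p w \<partial>lborel) * ?p z
          = (\<integral>\<^sup>+w. H x (t*z+u*w, u*z-t*w) * ?p z * ?p w \<partial>lborel)" .
    qed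
    also have "\<dots> = (\<integral>\<^sup>+a. \<integral>\<^sup>+b. H x (a, b) * ?p a * ?p b \<partial>lborel \<partial>lborel)"
      by (rule rotation_nn[OF HM tu upos])
    also have "\<dots> = (\<integral>\<^sup>+a. ?p a * ennreal (((1-k*r)*(x - g (s*x+a)))\<^sup>2 + k\<^sup>2) \<partial>lborel)"
    proof (rule nn_integral_cong)
      fix a
      have "(\<integral>\<^sup>+b. H x (a, b) * ?p a * ?p b \<partial>lborel)
          = (\<integral>\<^sup>+b. ?p a * (ennreal (((1-k*r)*(x - g (s*x + a)) - k * b)\<^sup>2) * ?p b) \<partial>lborel)"
        by (intro nn_integral_cong) (simp add: H_def mult_ac)
      also have "\<dots> = ?p a * (\<integral>\<^sup>+b. ennreal (((1-k*r)*(x - g (s*x + a)) - k * b)\<^sup>2) * ?p b \<partial>lborel)"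
        by (rule nn_integral_cmult) measurable
      also have "\<dots> = ?p a * ennreal (((1-k*r)*(x - g (s*x+a)))\<^sup>2 + k\<^sup>2)"
        by (simp only: gauss_sq_moment)
      finally show "(\<integral>\<^sup>+b. H x (a, b) * ?p a * ?p b \<partial>lborel) = ?p a * ennreal (((1-k*r)*(x - g (s*x+a)))\<^sup>2 + k\<^sup>2)" .
    qed
    also have "\<dots> = (\<integral>\<^sup>+a. ennreal ((1-k*r)\<^sup>2) * (ennreal ((x - g (s*x+a))\<^sup>2) * ?p a) + ennreal (k\<^sup>2) * ?p a \<partial>lborel)"
      by (intro nn_integral_cong)
         (simp add: power_mult_distrib ennreal_plus[symmetric] ennreal_mult'[symmetric] distrib_left mult_ac del: ennreal_plus)
    also have "\<dots> = ennreal ((1-k*r)\<^sup>2) * (\<integral>\<^sup>+a. ennreal ((x - g (s*x+a))\<^sup>2) * ?p a \<partial>lborel) + ennreal (k\<^sup>2) * (\<integral>\<^sup>+a. ?p a \<partial>lborel)"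
      by (subst nn_integral_add) (auto simp: nn_integral_cmult)
    also have "\<dots> = ennreal ((1-k*r)\<^sup>2) * (\<integral>\<^sup>+a. ennreal ((x - g (s*x+a))\<^sup>2) * ?p a \<partial>lborel) + ennreal (k\<^sup>2)"
      using nn_std_normal_one by simp
    finally show ?thesis .
  qed

  define Y' where "Y' = (\<lambda>\<omega>. s' * X \<omega> + Z \<omega>)"
  have Y'M[measurable]: "Y' \<in> borel_measurable M" unfolding Y'_def by measurable
  define C where "C = (1-k*r)\<^sup>2"
  have "(\<integral>\<^sup>+\<omega>. ennreal ((X \<omega> - gh (Y' \<omega>))\<^sup>2) \<partial>M)
      = (\<integral>\<^sup>+x. \<integral>\<^sup>+z. ennreal ((x - gh (s'*x+z))\<^sup>2) * ?p z \<partial>lborel \<partial>\<mu>)"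
    unfolding Y'_def \<mu>_def
    using law_transfer[OF M ind dZ, of "\<lambda>(x,z). ennreal ((x - gh (s' * x + z))\<^sup>2)"] by simp
  also have "\<dots> \<le> (\<integral>\<^sup>+x. ennreal C * (\<integral>\<^sup>+a. ennreal ((x - g (s*x+a))\<^sup>2) * ?p a \<partial>lborel) + ennreal (k\<^sup>2) \<partial>\<mu>)"
    unfolding C_def by (intro nn_integral_mono inner)
  also have "\<dots> = ennreal C * (\<integral>\<^sup>+x. \<integral>\<^sup>+a. ennreal ((x - g (s*x+a))\<^sup>2) * ?p a \<partial>lborel \<partial>\<mu>) + ennreal (k\<^sup>2)"
  proof -
    have sp: "emeasure (distr M borel X) UNIV = 1" using mu.emeasure_space_1 by (simp add: \<mu>_def)
    show ?thesis unfolding \<mu>_def by (subst nn_integral_add) (auto simp: nn_integral_cmult sp)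
  qed
  also have "\<dots> = ennreal (C * m + k\<^sup>2)"
    using m_nn mp unfolding \<mu>_def C_def by (simp add: ennreal_mult ennreal_plus)
  finally have I: "(\<integral>\<^sup>+\<omega>. ennreal ((X \<omega> - gh (Y' \<omega>))\<^sup>2) \<partial>M) \<le> ennreal (C * m + k\<^sup>2)" .
  have val: "C * m + k\<^sup>2 = m / (1 + \<delta> * m)"
  proof -
    have r2: "r\<^sup>2 = \<delta>" unfolding r_def using dpos by simp
    have pos: "1 + \<delta> * m > 0" using dpos mp by (simp add: add_pos_pos)
    have "1 - k*r = 1 / (1 + \<delta> * m)"
      unfolding k_def using pos r2 by (simp add: field_simps power2_eq_square)
    then have C1: "C = 1 / (1 + \<delta> * m)\<^sup>2" unfolding C_def by (simp add: power_divide)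
    have k2: "k\<^sup>2 = \<delta> * m\<^sup>2 / (1 + \<delta> * m)\<^sup>2"
      unfolding k_def by (simp add: power_divide power_mult_distrib r2)
    have "C * m + k\<^sup>2 = (m * (1 + \<delta> * m)) / (1 + \<delta> * m)\<^sup>2"
      unfolding C1 k2 by (simp add: add_divide_distrib power2_eq_square algebra_simps)
    also have "\<dots> = m / (1 + \<delta> * m)" using pos by (simp add: power2_eq_square)
    finally show ?thesis .
  qed
  have integ: "integrable M (\<lambda>\<omega>. (X \<omega> - gh (Y' \<omega>))\<^sup>2)"
  proof (subst integrable_iff_bounded, intro conjI)
    show "(\<lambda>\<omega>. (X \<omega> - gh (Y' \<omega>))\<^sup>2) \<in> borel_measurable M" by measurable
    have "(\<integral>\<^sup>+\<omega>. ennreal (norm ((X \<omega> - gh (Y' \<omega>))\<^sup>2)) \<partial>M) = (\<integral>\<^sup>+\<omega>. ennreal ((X \<omega> - gh (Y' \<omega>))\<^sup>2) \<partial>M)"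
      by simp
    also have "\<dots> < \<infinity>" using I by (simp add: le_less_trans)
    finally show "(\<integral>\<^sup>+\<omega>. ennreal (norm ((X \<omega> - gh (Y' \<omega>))\<^sup>2)) \<partial>M) < \<infinity>" .
  qed
  have eqE: "ennreal (\<integral>\<omega>. (X \<omega> - gh (Y' \<omega>))\<^sup>2 \<partial>M) = (\<integral>\<^sup>+\<omega>. ennreal ((X \<omega> - gh (Y' \<omega>))\<^sup>2) \<partial>M)"
    using integ by (intro nn_integral_eq_integral[symmetric]) auto
  have le0: "ennreal (\<integral>\<omega>. (X \<omega> - gh (Y' \<omega>))\<^sup>2 \<partial>M) \<le> ennreal (C * m + k\<^sup>2)"
    by (subst eqE) (rule I)
  have nn: "0 \<le> C * m + k\<^sup>2" using mp unfolding C_def by simp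
  have le1: "(\<integral>\<omega>. (X \<omega> - gh (Y' \<omega>))\<^sup>2 \<partial>M) \<le> C * m + k\<^sup>2"
    using le0 ennreal_le_iff[OF nn] by blast
  have "mmse M X Z \<gamma>' \<le> (\<integral>\<omega>. (X \<omega> - gh (Y' \<omega>))\<^sup>2 \<partial>M)"
    unfolding mmse_def Let_def s'_def[symmetric] Y'_def[symmetric]
    by (rule proj_ineq[OF M XM Y'M ghM X2 integ])
  with le1 val have le: "mmse M X Z \<gamma>' \<le> m / (1 + \<delta> * m)" by simp
  have pos: "1 + \<delta> * m > 0" using dpos mp by (simp add: add_pos_pos)
  have "1 / m + \<delta> = (1 + \<delta> * m) / m" using mp by (simp add: field_simps)
  also have "\<dots> = 1 / (m / (1 + \<delta> * m))" by simp
  also have "\<dots> \<le> 1 / mmse M X Z \<gamma>'"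
    using le m'pos pos mp by (intro divide_left_mono) auto
  finally show ?thesis unfolding \<delta>_def m_def by simp
qed



theorem lemma3:
  fixes M :: "'a measure" and X Z :: "'a \<Rightarrow> real"
  assumes "prob_space M"
    and "X \<in> borel_measurable M" and "Z \<in> borel_measurable M"
    and "prob_space.indep_var M borel X borel Z"
    and "distributed M lborel Z (\<lambda>x. ennreal (std_normal_density x))"
    and "integrable M (\<lambda>\<omega>. (X \<omega>)\<^sup>2)"
    and "integral\<^sup>L M X = 0"
    and "integral\<^sup>L M (\<lambda>\<omega>. (X \<omega>)\<^sup>2) = 1"
    \<comment> \<open>standing facts about mmse stated in the context\<close>
    and "continuous_on {0..} (mmse M X Z)"
    and "strict_antimono_on {0..} (mmse M X Z)"
    and "bij_betw (mmse M X Z) {0..} {0<..1}"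
  shows "antimono_on {0<..} (mercury_G M X Z)
    \<and> (\<forall>\<psi> D. 0 < \<psi> \<and> \<psi> < 1 \<and> (mercury_G M X Z has_real_derivative D) (at \<psi>) \<longrightarrow> D \<le> 0)
    \<and> (\<forall>\<psi>\<ge>1. mercury_G M X Z \<psi> = 1)
    \<and> (\<forall>l>0. mono_on {0<..} (\<lambda>W. (1 / l) * mercury_G M X Z (1 / (W * l))))"
proof -
  note M = assms(1) and XM = assms(2) and ZM = assms(3) and ind = assms(4) and dZ = assms(5)
    and X2 = assms(6) and sa = assms(10) and bij = assms(11)
  let ?m = "mmse M X Z"
  let ?G = "mercury_G M X Z"
  have inj: "inj_on ?m {0..}" and img: "?m ` {0..} = {0<..1}"
    using bij by (auto simp: bij_betw_def)
  have mrange: "0 < ?m \<gamma> \<and> ?m \<gamma> \<le> 1" if "0 \<le> \<gamma>" for \<gamma>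
    using img that by auto
  have inv: "mmse_inv M X Z \<psi> \<ge> 0 \<and> ?m (mmse_inv M X Z \<psi>) = \<psi>" if "0 < \<psi>" "\<psi> \<le> 1" for \<psi>
  proof -
    have "\<psi> \<in> ?m ` {0..}" using img that by auto
    then show ?thesis unfolding mmse_inv_def
      using the_inv_into_into[OF inj, of \<psi> "{0..}"] f_the_inv_into_f[OF inj] by auto
  qed
  have KEY: "\<gamma>' - \<gamma> \<le> 1 / ?m \<gamma>' - 1 / ?m \<gamma>" if "0 \<le> \<gamma>" "\<gamma> < \<gamma>'" for \<gamma> \<gamma>'
    by (rule key[OF M XM ZM ind dZ X2 that]) (use mrange that in auto)
  have Gle: "?G \<psi>2 \<le> ?G \<psi>1" if p: "0 < \<psi>1" "\<psi>1 \<le> \<psi>2" for \<psi>1 \<psi>2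
  proof (cases "\<psi>1 \<ge> 1")
    case True
    then show ?thesis using p by (simp add: mercury_G_def)
  next
    case False
    define \<gamma>1 where "\<gamma>1 = mmse_inv M X Z \<psi>1"
    have g1: "\<gamma>1 \<ge> 0" "?m \<gamma>1 = \<psi>1" using inv[of \<psi>1] p False unfolding \<gamma>1_def by auto
    have G1: "?G \<psi>1 = 1 / \<psi>1 - \<gamma>1" using False unfolding mercury_G_def \<gamma>1_def by simp
    show ?thesis
    proof (cases "\<psi>2 \<ge> 1")
      case True
      have "1 \<le> 1 / \<psi>1 - \<gamma>1"
      proof (cases "\<gamma>1 = 0")
        case True
        then show ?thesis using p False by simp
      next
        case nz: False
        have "\<gamma>1 - 0 \<le> 1 / ?m \<gamma>1 - 1 / ?m 0" using KEY[of 0 \<gamma>1] g1 nz by simp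
        moreover have "1 \<le> 1 / ?m 0" using mrange[of 0] by simp
        ultimately show ?thesis using g1 by simp
      qed
      then show ?thesis using True G1 by (simp add: mercury_G_def)
    next
      case F2: False
      define \<gamma>2 where "\<gamma>2 = mmse_inv M X Z \<psi>2"
      have g2: "\<gamma>2 \<ge> 0" "?m \<gamma>2 = \<psi>2" using inv[of \<psi>2] p F2 unfolding \<gamma>2_def by auto
      have G2: "?G \<psi>2 = 1 / \<psi>2 - \<gamma>2" using F2 unfolding mercury_G_def \<gamma>2_def by simp
      consider "\<gamma>2 < \<gamma>1" | "\<gamma>2 = \<gamma>1" | "\<gamma>1 < \<gamma>2" by linarith
      then show ?thesis
      proof cases
        case 1
        then show ?thesis using KEY[of \<gamma>2 \<gamma>1] g1 g2 G1 G2 by simp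
      next
        case 2
        then show ?thesis using g1 g2 G1 G2 by simp
      next
        case 3
        have "?m \<gamma>2 < ?m \<gamma>1" using sa 3 g1 g2 unfolding monotone_on_def by auto
        then show ?thesis using p g1 g2 by simp
      qed
    qed
  qed
  have P1: "antimono_on {0<..} ?G"
    by (rule monotone_onI) (use Gle in auto)
  have P2: "D \<le> 0" if "0 < \<psi>" "\<psi> < 1" "(?G has_real_derivative D) (at \<psi>)" for \<psi> D
  proof -
    have "((\<lambda>y. (?G y - ?G \<psi>) / (y - \<psi>)) \<longlongrightarrow> D) (at \<psi>)"
      using that(3) by (simp add: has_field_derivative_iff)
    then have lim: "((\<lambda>y. (?G y - ?G \<psi>) / (y - \<psi>)) \<longlongrightarrow> D) (at_right \<psi>)"
      by (rule filterlim_mono) (auto simp: at_le)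
    have ev: "eventually (\<lambda>y. (?G y - ?G \<psi>) / (y - \<psi>) \<le> 0) (at_right \<psi>)"
    proof (rule eventually_at_rightI[of \<psi> "\<psi> + 1"])
      fix y assume "y \<in> {\<psi><..<\<psi> + 1}"
      then have "\<psi> < y" by simp
      then have "?G y \<le> ?G \<psi>" using Gle[of \<psi> y] that by simp
      then show "(?G y - ?G \<psi>) / (y - \<psi>) \<le> 0" using \<open>\<psi> < y\<close>
        by (simp add: divide_nonpos_pos)
    qed simp
    show ?thesis
      by (rule tendsto_upperbound[OF lim ev]) simp
  qed
  have P3: "?G \<psi> = 1" if "\<psi> \<ge> 1" for \<psi> using that by (simp add: mercury_G_def)
  have P4: "mono_on {0<..} (\<lambda>W. (1 / l) * ?G (1 / (W * l)))" if l: "l > 0" for l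
  proof (rule monotone_onI)
    fix W1 W2 :: real assume "W1 \<in> {0<..}" "W2 \<in> {0<..}" "W1 \<le> W2"
    then have "0 < 1 / (W2 * l)" "1 / (W2 * l) \<le> 1 / (W1 * l)"
      using l by (auto intro!: divide_left_mono mult_pos_pos mult_right_mono)
    then have "?G (1 / (W1 * l)) \<le> ?G (1 / (W2 * l))" using Gle by blast
    then show "(1 / l) * ?G (1 / (W1 * l)) \<le> (1 / l) * ?G (1 / (W2 * l))"
      using l by (simp add: divide_right_mono)
  qed
  show ?thesis using P1 P2 P3 P4 by blast
qed

end
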